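(* Let $\varphi$ be any irrevocable (non-wasteful) distribution policy and suppose the characteristic function satisfies $v\in V_1$. Then the competitive ratio of $\varphi$ with respect to greedy players is $\alpha=1$; that is, for every $v\in V_1$ and every arrival order $\pi$, the coalition structure formed by greedy players maximizes social welfare.
   Context: Players: a finite set $N=\{a_1,\dots,a_n\}$. A characteristic function is $v:2^N\to\mathbb{R}_{\ge 0}$ with $v(\emptyset)=0$. There are fixed, known constants $0<\mathsf{min}\le\mathsf{max}$ and every $v$ considered is monotone and bounded: $\mathsf{min}\le v(S)\le v(T)\le\mathsf{max}$ for all nonempty $S\subseteq T\subseteq N$. For an integer $\delta\ge1$, $V_\delta$ denotes the set of such $v$ for which additionally $\delta\cdot\mathsf{min}\le\mathsf{max}<(\delta+1)\cdot\mathsf{min}$. A coalition structure is a partition $C$ of $N$; its social welfare is $\mathsf{SW}(C\mid v)=\sum_{S\in C}v(S)$. Online process: an arrival order is a permutation $\pi=(\pi_1,\dots,\pi_n)$ of $N$; player $\pi_t$ arrives at time $t$. For $S\subseteq N$, $\pi_{|S}$ denotes the players of $S$ in the relative order of $\pi$; $\pi_{|S}$ is a prefix of $\pi_{|T}$ if $S\subseteq T$ and the players of $S$ are the first $|S|$ players of $\pi_{|T}$. Let $C^{t-1}$ be the coalition structure of the players arrived before time $t$ ($C^0=\emptyset$). At time $t$, player $\pi_t$ either joins an existing coalition $S\in C^{t-1}$ or forms the new coalition $\{\pi_t\}$ (choice $S=\emptyset$); decisions are never revised. A distribution policy $\varphi$ assigns to every $S\subseteq N$ and order $\pi_{|S}$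 a vector $(\varphi_i(S,\pi_{|S}\mid v))_{i\in S}$, and is non-wasteful: $\sum_{i\in S}\varphi_i(S,\pi_{|S})=v(S)$. It is irrevocable if for every $\pi$, every $S\subseteq T\subseteq N$ with $\pi_{|S}$ a prefix of $\pi_{|T}$, and every $i\in S$, $\varphi_i(S,\pi_{|S})\le\varphi_i(T,\pi_{|T})$ (value given to a player is never reduced when later players join). Greedy players: player $\pi_t$ chooses $S^*\in\arg\max_{S\in C^{t-1}\cup\{\emptyset\}}\varphi_{\pi_t}(S\cup\{\pi_t\},\pi_{|S\cup\{\pi_t\}})$ (ties broken by a predetermined rule). $C_g(v,\pi\mid\varphi)$ denotes the final coalition structure so formed. The competitive ratio of $\varphi$ over a class of characteristic functions is $\alpha=\inf_{v,\pi}\mathsf{SW}(C_g(v,\pi\mid\varphi))/\max_C\mathsf{SW}(C\mid v)$, the infimum over $v$ in the class and all arrival orders $\pi$. *)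

theory Defs
  imports Complex_Main "HOL-Library.Disjoint_Sets"
begin

definition in_V :: "nat \<Rightarrow> real \<Rightarrow> real \<Rightarrow> 'a set \<Rightarrow> ('a set \<Rightarrow> real) \<Rightarrow> bool" where
  "in_V \<delta> mn mx N v \<longleftrightarrow>
     0 < mn \<and> mn \<le> mx \<and> v {} = 0 \<and>
     (\<forall>S T. S \<noteq> {} \<longrightarrow> S \<subseteq> T \<longrightarrow> T \<subseteq> N \<longrightarrow> mn \<le> v S \<and> v S \<le> v T \<and> v T \<le> mx) \<and>
     real \<delta> * mn \<le> mx \<and> mx < (real \<delta> + 1) * mn"

text \<open>A distribution policy phi gives, for each characteristic function v, each coalition
  S together with an order of its players (a distinct list xs with set xs = S) and each
  player i, the value phi v xs i.\<close>
definition non_wasteful :: "'a set \<Rightarrow> ('a set \<Rightarrow> real) \<Rightarrow> ('a list \<Rightarrow> 'a \<Rightarrow> real) \<Rightarrow> bool" where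
  "non_wasteful N v \<phi> \<longleftrightarrow>
     (\<forall>xs. distinct xs \<longrightarrow> set xs \<subseteq> N \<longrightarrow> (\<Sum>i\<in>set xs. \<phi> xs i) = v (set xs))"

definition irrevocable :: "'a set \<Rightarrow> ('a list \<Rightarrow> 'a \<Rightarrow> real) \<Rightarrow> bool" where
  "irrevocable N \<phi> \<longleftrightarrow>
     (\<forall>ys k i. distinct ys \<longrightarrow> set ys \<subseteq> N \<longrightarrow> i \<in> set (take k ys) \<longrightarrow>
        \<phi> (take k ys) i \<le> \<phi> ys i)"

text \<open>Greedy runs: greedy_run phi xs C means that after the players of xs have arrived
  (in this order), the coalition structure C (each coalition listed in arrival order)
  can be formed by greedy players (for some tie-breaking rule).\<close>
inductive greedy_run :: "('a list \<Rightarrow> 'a \<Rightarrow> real) \<Rightarrow> 'a list \<Rightarrow> 'a list list \<Rightarrow> bool"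
  for \<phi> :: "'a list \<Rightarrow> 'a \<Rightarrow> real" where
  start: "greedy_run \<phi> [] []"
| new: "greedy_run \<phi> xs C \<Longrightarrow>
          (\<forall>S\<in>set C. \<phi> (S @ [p]) p \<le> \<phi> [p] p) \<Longrightarrow>
          greedy_run \<phi> (xs @ [p]) (C @ [[p]])"
| join: "greedy_run \<phi> xs C \<Longrightarrow> j < length C \<Longrightarrow>
          \<phi> [p] p \<le> \<phi> (C ! j @ [p]) p \<Longrightarrow>
          (\<forall>S\<in>set C. \<phi> (S @ [p]) p \<le> \<phi> (C ! j @ [p]) p) \<Longrightarrow>
          greedy_run \<phi> (xs @ [p]) (C[j := C ! j @ [p]])"

definition SW :: "('a set \<Rightarrow> real) \<Rightarrow> 'a list list \<Rightarrow> real" where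
  "SW v C = (\<Sum>S\<leftarrow>C. v (set S))"

end

theory Submission
  imports Defs
begin

lemma greedy_singletons:
  assumes V: "in_V 1 mn mx N v"
    and nw: "non_wasteful N v f"
    and irr: "irrevocable N f"
  shows "greedy_run f xs C \<Longrightarrow> distinct xs \<Longrightarrow> set xs \<subseteq> N \<Longrightarrow> C = map (\<lambda>p. [p]) xs"
proof (induction rule: greedy_run.induct)
  case start
  then show ?case by simp
next
  case (new xs C p)
  then show ?case by simp
next
  case (join xs C j p)
  have C: "C = map (\<lambda>p. [p]) xs" using join by simp
  define q where "q = xs ! j"
  have j: "j < length xs" using join C by simp
  have Cj: "C ! j = [q]" using C j q_def by simp
  have q: "q \<in> set xs" using j q_def by simp
  have pN: "p \<in> N" "q \<in> N" using join q by auto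
  have pq: "p \<noteq> q" using join q by auto
  have d: "distinct [q,p]" using pq by simp
  have s1: "f [p] p = v {p}" using nw pN unfolding non_wasteful_def
    by (metis (no_types, lifting) distinct_singleton empty_set empty_subsetI insert_subset list.simps(15) sum.insert finite.emptyI emptyE sum.empty add.right_neutral)
  have s1q: "f [q] q = v {q}" using nw pN unfolding non_wasteful_def
    by (metis (no_types, lifting) distinct_singleton empty_set empty_subsetI insert_subset list.simps(15) sum.insert finite.emptyI emptyE sum.empty add.right_neutral)
  have s2: "f [q,p] q + f [q,p] p = v {q,p}" using nw pN d pq unfolding non_wasteful_def
    apply (drule_tac x="[q,p]" in spec) by simp
  have ir: "f [q] q \<le> f [q,p] q" using irr pN d unfolding irrevocable_def
    apply (drule_tac x="[q,p]" in spec) apply (drule_tac x=1 in spec) apply (drule_tac x=q in spec) by simp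
  have b: "v {q,p} \<le> mx" "mn \<le> v {q}" "mn \<le> v {p}" "mx < 2 * mn"
    using V pN unfolding in_V_def
    apply (auto)
    apply (drule_tac x="{q,p}" in spec) by blast
  have "f (C ! j @ [p]) p < f [p] p" using Cj s1 s1q s2 ir b by simp
  then show ?case using join by simp
qed

lemma sum_le_singletons:
  assumes V: "in_V 1 mn mx N v" and S: "S \<subseteq> N" "S \<noteq> {}" "finite S"
  shows "v S \<le> (\<Sum>p\<in>S. v {p})"
proof (cases "card S = 1")
  case True
  then obtain p where "S = {p}" by (meson card_1_singletonE)
  then show ?thesis by simp
next
  case False
  have c: "card S \<ge> 2" using False S by (metis Suc_1 card_0_eq not_less_eq_eq le_antisym not_less_eq_eq One_nat_def less_eq_Suc_le not_less_eq_eq neq0_conv)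
  have b: "\<forall>p\<in>S. mn \<le> v {p}" "v S \<le> mx" "mx < 2 * mn" "0 < mn"
    using V S unfolding in_V_def by auto
  have "(\<Sum>p\<in>S. mn) \<le> (\<Sum>p\<in>S. v {p})" using b(1) by (intro sum_mono) auto
  moreover have "(\<Sum>p\<in>S. mn) = real (card S) * mn" by simp
  moreover have "2 * mn \<le> real (card S) * mn" using c b(4) by simp
  ultimately show ?thesis using b by linarith
qed

theorem theorem1:
  fixes N :: "'a set" and mn mx :: real
    and \<phi> :: "('a set \<Rightarrow> real) \<Rightarrow> 'a list \<Rightarrow> 'a \<Rightarrow> real"
    and v :: "'a set \<Rightarrow> real" and \<pi> :: "'a list" and C :: "'a list list"
  assumes "finite N"
    and "in_V 1 mn mx N v"
    and "non_wasteful N v (\<phi> v)"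
    and "irrevocable N (\<phi> v)"
    and "distinct \<pi>" and "set \<pi> = N"
    and "greedy_run (\<phi> v) \<pi> C"
  shows "\<forall>P. partition_on N P \<longrightarrow> (\<Sum>S\<in>P. v S) \<le> SW v C"
proof (intro allI impI)
  fix P assume P: "partition_on N P"
  have C: "C = map (\<lambda>p. [p]) \<pi>"
    using greedy_singletons[OF assms(2,3,4) assms(7,5)] assms(6) by simp
  have SW: "SW v C = (\<Sum>p\<in>N. v {p})"
    unfolding SW_def C using assms(5,6) by (simp add: o_def sum_list_distinct_conv_sum_set)
  have fP: "finite P" using P assms(1) partition_on_def
    by (metis Sup_le_iff finite_UnionD order_refl)
  have "(\<Sum>S\<in>P. v S) \<le> (\<Sum>S\<in>P. \<Sum>p\<in>S. v {p})"
  proof (rule sum_mono)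
    fix S assume "S \<in> P"
    then show "v S \<le> (\<Sum>p\<in>S. v {p})"
      using P assms(1,2) sum_le_singletons[of mn mx N v S]
      unfolding partition_on_def by (metis Sup_upper finite_subset)
  qed
  also have "\<dots> = (\<Sum>p\<in>\<Union>P. v {p})"
    using P fP assms(1) unfolding partition_on_def
    by (subst sum.Union_disjoint) (auto intro: finite_subset simp: disjoint_def pairwise_def disjnt_def)
  also have "\<dots> = SW v C" using SW P unfolding partition_on_def by simp
  finally show "(\<Sum>S\<in>P. v S) \<le> SW v C" .
qed

end
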